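(* Let $n>s\ge1$ be integers and ${\bm v}=(v_0,\dots,v_s)\in\mathbb{R}^{s+1}$. Let $f_{\bm v}(t;x)=x^n+t\sum_{k=0}^sv_kx^k$, $P_{\bm v}(t)=\det M_n(f_{\bm v}(t;x),f'_{\bm v}(t;x))\in\mathbb{R}[t]$ (derivative in $x$), assumed not identically zero, and $\alpha_{\bm v}=\max\{\alpha\in\mathbb{R}\mid P_{\bm v}(\alpha)=0\}$. Suppose there exist an integer $\gamma_0$ and a real $\rho_0>\alpha_{\bm v}$ such that $N_{f_{\bm v}(\xi;x)}=\gamma_0$ for all $\xi>\rho_0$. Then $N_{f_{\bm v}(\xi;x)}=\gamma_0$ for all $\xi>\alpha_{\bm v}$.
   Context: Bezoutian: for polynomials $f_1,f_2$ over a field $F$ of characteristic $0$ and an integer $n\ge\max\{\deg f_1,\deg f_2\}$, write $\frac{f_1(x)f_2(y)-f_1(y)f_2(x)}{x-y}=\sum_{i,j=1}^n\alpha_{ij}x^{n-i}y^{n-j}\in F[x,y]$ and set $M_n(f_1,f_2)=(\alpha_{ij})_{1\le i,j\le n}$. $N_h$ is the number of distinct real roots of a real polynomial $h$. Note $P_{\bm v}(0)=0$ since $f_{\bm v}(0;x)=x^n$. *)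

theory Defs
  imports "Jordan_Normal_Form.Determinant" "HOL-Computational_Algebra.Polynomial"
begin

text \<open>Bivariate polynomials in x,y are represented as elements of 'a poly poly:
  the outer variable is x, the inner variable (coefficients) is y.\<close>

definition lift_x :: "'a::comm_ring_1 poly \<Rightarrow> 'a poly poly" where
  "lift_x f = map_poly (\<lambda>c. [:c:]) f"

definition lift_y :: "'a::comm_ring_1 poly \<Rightarrow> 'a poly poly" where
  "lift_y f = [:f:]"

text \<open>The quotient (f1(x) f2(y) - f1(y) f2(x)) / (x - y) in F[x,y] (exact division).\<close>
definition bezout_quot :: "'a::idom_divide poly \<Rightarrow> 'a poly \<Rightarrow> 'a poly poly" where
  "bezout_quot f1 f2 =
     (lift_x f1 * lift_y f2 - lift_y f1 * lift_x f2) div [: - [:0, 1:], 1 :]"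

text \<open>alpha_ij for 1 <= i,j <= n is the coefficient of x^(n-i) y^(n-j);
  the matrix is stored 0-indexed, entry (i,j) corresponding to alpha_(i+1)(j+1).\<close>
definition bezout_mat :: "nat \<Rightarrow> 'a::idom_divide poly \<Rightarrow> 'a poly \<Rightarrow> 'a mat" where
  "bezout_mat n f1 f2 =
     mat n n (\<lambda>(i, j). coeff (coeff (bezout_quot f1 f2) (n - (i + 1))) (n - (j + 1)))"

text \<open>f_v(t;x) = x^n + t * sum_{k=0}^s v_k x^k, as a polynomial in x with coefficients in R[t].\<close>
definition f_v :: "nat \<Rightarrow> nat \<Rightarrow> (nat \<Rightarrow> real) \<Rightarrow> real poly poly" where
  "f_v n s v = monom 1 n + smult [:0, 1:] (\<Sum>k\<le>s. monom [:v k:] k)"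

definition f_v_at :: "nat \<Rightarrow> nat \<Rightarrow> (nat \<Rightarrow> real) \<Rightarrow> real \<Rightarrow> real poly" where
  "f_v_at n s v \<xi> = map_poly (\<lambda>c. poly c \<xi>) (f_v n s v)"

definition P_v :: "nat \<Rightarrow> nat \<Rightarrow> (nat \<Rightarrow> real) \<Rightarrow> real poly" where
  "P_v n s v = det (bezout_mat n (f_v n s v) (pderiv (f_v n s v)))"

definition alpha_v :: "nat \<Rightarrow> nat \<Rightarrow> (nat \<Rightarrow> real) \<Rightarrow> real" where
  "alpha_v n s v = Max {\<alpha>. poly (P_v n s v) \<alpha> = 0}"

definition num_real_roots :: "real poly \<Rightarrow> nat" where
  "num_real_roots h = card {x. poly h x = 0}"

end

theory Submission imports Defs begin

lemma poly_map_eval: "poly (map_poly (\<lambda>c. poly c \<xi>) p) z = poly (poly p [:z:]) (\<xi>::real)"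
  by (induction p rule: pCons_induct) (auto simp: map_poly_pCons)

lemma poly_lift_x_const: "poly (lift_x f) [:C:] = [:poly f C:]"
  unfolding lift_x_def by (induction f rule: pCons_induct) (auto simp: map_poly_pCons)

lemma poly_lift_x_Y: "poly (lift_x f) [:0,1:] = (f :: 'a::comm_ring_1 poly)"
  unfolding lift_x_def 
proof (induction f rule: pCons_induct)
  case (pCons a p)
  then show ?case by (auto simp: map_poly_pCons)
qed simp

lemma poly_lift_y: "poly (lift_y f) c = f"
  unfolding lift_y_def by simp

lemma poly_sum_less:
  fixes p :: "'a::comm_ring_1 poly"
  assumes "degree p < n"
  shows "poly p x = (\<Sum>i<n. coeff p i * x ^ i)"
proof -
  have "poly p x = (\<Sum>i\<le>degree p. coeff p i * x ^ i)" by (simp add: poly_altdef)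
  also have "\<dots> = (\<Sum>i<n. coeff p i * x ^ i)"
    by (rule sum.mono_neutral_left) (use assms in \<open>auto intro: le_degree\<close>)
  finally show ?thesis .
qed

lemma evhom: "comm_ring_hom (\<lambda>p. poly p (a::'a::comm_ring_1))"
  by unfold_locales auto

lemma bezout_det_zero:
  fixes f1 f2 :: "real poly poly" and \<xi> r :: real
  assumes n: "1 \<le> n" and d1: "degree f1 \<le> n" and d2: "degree f2 \<le> n"
    and r1: "poly (map_poly (\<lambda>c. poly c \<xi>) f1) r = 0"
    and r2: "poly (map_poly (\<lambda>c. poly c \<xi>) f2) r = 0"
  shows "poly (det (bezout_mat n f1 f2)) \<xi> = 0"
proof -
  define D :: "real poly poly poly" where "D = [: - [:0, 1:], 1 :]"
  define A where "A = lift_x f1 * lift_y f2 - lift_y f1 * lift_x f2"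
  define B where "B = bezout_quot f1 f2"
  have BA: "B = A div D" unfolding B_def A_def D_def bezout_quot_def by simp
  have "poly A [:0,1:] = 0" unfolding A_def by (simp add: poly_lift_x_Y poly_lift_y)
  hence dvd: "D dvd A" unfolding D_def using poly_eq_0_iff_dvd by blast
  hence BDA: "B * D = A" unfolding BA by simp
  have Dnz: "D \<noteq> 0" and degD: "degree D = 1" unfolding D_def by auto
  have degA: "degree A \<le> n" unfolding A_def
  proof (rule degree_diff_le)
    show "degree (lift_x f1 * lift_y f2) \<le> n"
      using degree_mult_le[of "lift_x f1" "lift_y f2"] degree_map_poly[of "\<lambda>c. [:c:]" f1] d1
      unfolding lift_x_def lift_y_def by auto
    show "degree (lift_y f1 * lift_x f2) \<le> n"
      using degree_mult_le[of "lift_y f1" "lift_x f2"] degree_map_poly[of "\<lambda>c. [:c:]" f2] d2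
      unfolding lift_x_def lift_y_def by auto
  qed
  have degB: "degree B < n"
  proof (cases "B = 0")
    case True then show ?thesis using n by simp
  next
    case False
    have "degree A = degree B + 1" using BDA[symmetric] False Dnz degD by (simp add: degree_mult_eq)
    then show ?thesis using degA by simp
  qed
  define E where "E q y = poly (poly (poly q [:[:r:]:]) [:y:]) \<xi>" for q :: "real poly poly poly" and y
  have EA: "E A y = 0" for y
    unfolding E_def A_def using r1 r2
    by (simp add: poly_lift_x_const poly_lift_y poly_map_eval)
  have ED: "E D y = r - y" for y unfolding E_def D_def by simp
  have EB: "E B y = 0" if "y \<noteq> r" for y
  proof -
    have "E B y * (r - y) = E A y" unfolding BDA[symmetric] E_def D_def by (simp add: algebra_simps)
    then show ?thesis using EA that by simp
  qed
  define Q where "Q = map_poly (\<lambda>c. poly c \<xi>) (poly B [:[:r:]:])"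
  have PQ: "poly Q y = E B y" for y unfolding Q_def E_def poly_map_eval ..
  have "Q = 0"
  proof (rule ccontr)
    assume "Q \<noteq> 0"
    hence "finite {y. poly Q y = 0}" by (rule poly_roots_finite)
    moreover have "UNIV - {r} \<subseteq> {y. poly Q y = 0}" using PQ EB by auto
    ultimately have "finite (UNIV - {r} :: real set)" by (rule finite_subset[rotated])
    thus False using infinite_UNIV_char_0[where 'a=real] by simp
  qed
  have coeffQ: "(\<Sum>m<n. poly (coeff (coeff B m) j) \<xi> * r ^ m) = 0" for j
  proof -
    have "coeff Q j = 0" using \<open>Q = 0\<close> by simp
    moreover have "coeff Q j = (\<Sum>m<n. poly (coeff (coeff B m) j) \<xi> * r ^ m)"
      unfolding Q_def poly_sum_less[OF degB] poly_const_pow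
      by (simp add: coeff_sum poly_sum coeff_map_poly mult.commute)
    ultimately show ?thesis by simp
  qed
  define M where "M = bezout_mat n f1 f2"
  define M' where "M' = map_mat (\<lambda>p. poly p \<xi>) M"
  have M: "M \<in> carrier_mat n n" unfolding M_def bezout_mat_def by simp
  have M': "M' \<in> carrier_mat n n" unfolding M'_def using M by simp
  have hd: "det M' = poly (det M) \<xi>"
    unfolding M'_def by (rule comm_ring_hom.hom_det[OF evhom])
  define w :: "real vec" where "w = vec n (\<lambda>i. r ^ (n - Suc i))"
  have w: "w \<in> carrier_vec n" unfolding w_def by simp
  have wnz: "w \<noteq> 0\<^sub>v n"
  proof
    assume "w = 0\<^sub>v n"
    hence "w $ (n - 1) = 0" using n by simp
    thus False unfolding w_def using n by simp
  qed
  have "transpose_mat M' *\<^sub>v w = 0\<^sub>v n"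
  proof (rule eq_vecI)
    fix j assume j: "j < dim_vec (0\<^sub>v n :: real vec)"
    hence j: "j < n" by simp
    have "(transpose_mat M' *\<^sub>v w) $ j = (\<Sum>i<n. poly (coeff (coeff B (n - Suc i)) (n - Suc j)) \<xi> * r ^ (n - Suc i))"
      using j unfolding M'_def M_def bezout_mat_def w_def B_def
      by (simp add: mult_mat_vec_def scalar_prod_def atLeast0LessThan)
    also have "\<dots> = (\<Sum>m<n. poly (coeff (coeff B m) (n - Suc j)) \<xi> * r ^ m)"
      by (rule sum.nat_diff_reindex)
    also have "\<dots> = 0" by (rule coeffQ)
    finally show "(transpose_mat M' *\<^sub>v w) $ j = 0\<^sub>v n $ j" using j by simp
  qed (use M' in simp)
  hence "det (transpose_mat M') = 0"
    using det_0_iff_vec_prod_zero_field[of "transpose_mat M'" n] M' w wnz by auto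
  hence "det M' = 0" using det_transpose[OF M'] by simp
  thus ?thesis using hd unfolding M_def by simp
qed
definition gv :: "nat \<Rightarrow> (nat \<Rightarrow> real) \<Rightarrow> real poly" where
  "gv s v = (\<Sum>k\<le>s. monom (v k) k)"

lemma f_v_at_eq: "f_v_at n s v \<xi> = monom 1 n + smult \<xi> (gv s v)"
  unfolding f_v_at_def f_v_def gv_def
  by (rule poly_eqI) (simp add: coeff_map_poly coeff_sum poly_sum coeff_monom)

lemma map_pderiv: "map_poly (\<lambda>c. poly c \<xi>) (pderiv p) = pderiv (map_poly (\<lambda>c. poly c (\<xi>::real)) p)"
  by (rule poly_eqI) (simp add: coeff_map_poly coeff_pderiv of_nat_poly)

lemma degree_f_v: assumes "s < n" shows "degree (f_v n s v) \<le> n"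
proof (rule degree_le, intro allI impI)
  fix i assume "n < i"
  thus "coeff (f_v n s v) i = 0" using assms unfolding f_v_def
    by (simp add: coeff_sum coeff_monom)
qed

lemma P_v_root:
  assumes "s < n" "1 \<le> n" "poly (f_v_at n s v \<xi>) r = 0" "poly (pderiv (f_v_at n s v \<xi>)) r = 0"
  shows "poly (P_v n s v) \<xi> = 0"
  unfolding P_v_def
proof (rule bezout_det_zero[where r = r])
  show "degree (f_v n s v) \<le> n" using degree_f_v[OF assms(1)] .
  show "degree (pderiv (f_v n s v)) \<le> n"
    using degree_f_v[OF assms(1), of v] degree_pderiv[of "f_v n s v"] by linarith
  show "poly (map_poly (\<lambda>c. poly c \<xi>) (f_v n s v)) r = 0" using assms(3) unfolding f_v_at_def .
  show "poly (map_poly (\<lambda>c. poly c \<xi>) (pderiv (f_v n s v))) r = 0"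
    using assms(4) unfolding map_pderiv f_v_at_def .
qed (use assms in auto)

lemma F_eval: "poly (f_v_at n s v \<xi>) x = x ^ n + \<xi> * poly (gv s v) x"
  unfolding f_v_at_eq by (simp add: poly_monom)

lemma DF_eval: "poly (pderiv (f_v_at n s v \<xi>)) x = poly (pderiv (monom 1 n)) x + \<xi> * poly (pderiv (gv s v)) x"
  unfolding f_v_at_eq by (simp add: pderiv_add pderiv_smult)

lemma gv_eval: "poly (gv s v) x = (\<Sum>k\<le>s. v k * x ^ k)"
  unfolding gv_def by (simp add: poly_sum poly_monom)

lemma F_nz: assumes "s < n" shows "f_v_at n s v \<xi> \<noteq> 0"
proof -
  have "coeff (f_v_at n s v \<xi>) n = 1" using assms unfolding f_v_at_eq gv_def
    by (simp add: coeff_sum coeff_monom)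
  thus ?thesis by auto
qed

lemma far_field:
  assumes "s < n"
  shows "\<exists>R>0. \<forall>\<xi> x. \<bar>\<xi> - \<xi>0\<bar> \<le> 1 \<longrightarrow> R \<le> \<bar>x\<bar> \<longrightarrow> poly (f_v_at n s v \<xi>) x \<noteq> 0"
proof -
  define B where "B = \<bar>\<xi>0\<bar> + 1"
  define C where "C = (\<Sum>k\<le>s. \<bar>v k\<bar>)"
  have B0: "B \<ge> 0" and C0: "C \<ge> 0" unfolding B_def C_def by (auto intro: sum_nonneg)
  define R where "R = B * C + 1"
  have R1: "R \<ge> 1" unfolding R_def using B0 C0 by simp
  show ?thesis
  proof (intro exI[of _ R] conjI allI impI)
    show "R > 0" using R1 by simp
    fix \<xi> x assume xi: "\<bar>\<xi> - \<xi>0\<bar> \<le> 1" and x: "R \<le> \<bar>x\<bar>"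
    have x1: "1 \<le> \<bar>x\<bar>" using x R1 by simp
    have xiB: "\<bar>\<xi>\<bar> \<le> B" unfolding B_def using xi by simp
    have "\<bar>poly (gv s v) x\<bar> \<le> (\<Sum>k\<le>s. \<bar>v k\<bar> * \<bar>x\<bar> ^ k)"
      unfolding gv_eval by (rule order_trans[OF sum_abs]) (simp add: abs_mult power_abs)
    also have "\<dots> \<le> (\<Sum>k\<le>s. \<bar>v k\<bar> * \<bar>x\<bar> ^ s)"
      by (rule sum_mono) (auto intro!: mult_left_mono power_increasing x1)
    also have "\<dots> = C * \<bar>x\<bar> ^ s" unfolding C_def by (simp add: sum_distrib_right)
    finally have g: "\<bar>poly (gv s v) x\<bar> \<le> C * \<bar>x\<bar> ^ s" .
    have "\<bar>\<xi> * poly (gv s v) x\<bar> \<le> B * (C * \<bar>x\<bar> ^ s)"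
      unfolding abs_mult by (rule mult_mono[OF xiB g]) (use B0 in auto)
    also have "\<dots> = (B * C) * \<bar>x\<bar> ^ s" by simp
    also have "\<dots> < \<bar>x\<bar> * \<bar>x\<bar> ^ s"
      by (rule mult_strict_right_mono) (use x x1 R_def in auto)
    also have "\<dots> = \<bar>x\<bar> ^ Suc s" by simp
    also have "\<dots> \<le> \<bar>x\<bar> ^ n" by (rule power_increasing) (use assms x1 in auto)
    finally have "\<bar>\<xi> * poly (gv s v) x\<bar> < \<bar>x ^ n\<bar>" by (simp add: power_abs)
    thus "poly (f_v_at n s v \<xi>) x \<noteq> 0" unfolding F_eval by auto
  qed
qed

lemma same_sign: "\<bar>a - b\<bar> < \<bar>b\<bar> \<Longrightarrow> 0 < a * (b::real)"
  by (cases "b \<ge> 0") (auto simp: zero_less_mult_iff abs_if split: if_splits)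

lemma sign_prod: "0 < a * b \<Longrightarrow> 0 < c * d \<Longrightarrow> b * d < 0 \<Longrightarrow> a * c < (0::real)"
  by (auto simp: zero_less_mult_iff mult_less_0_iff)


lemma local_const:
  assumes sn: "s < n"
    and simple: "\<forall>x. poly (f_v_at n s v \<xi>0) x = 0 \<longrightarrow> poly (pderiv (f_v_at n s v \<xi>0)) x \<noteq> 0"
  shows "\<exists>\<eta>>0. \<forall>\<xi>. \<bar>\<xi> - \<xi>0\<bar> < \<eta> \<longrightarrow>
           card {x. poly (f_v_at n s v \<xi>) x = 0} = card {x. poly (f_v_at n s v \<xi>0) x = 0}"
proof -
  define F where "F \<xi> x = poly (f_v_at n s v \<xi>) x" for \<xi> x
  define DF where "DF \<xi> x = poly (pderiv (f_v_at n s v \<xi>)) x" for \<xi> x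
  define g where "g = gv s v"
  have Fpert: "F \<xi> x - F \<xi>0 x = (\<xi> - \<xi>0) * poly g x" for \<xi> x
    unfolding F_def F_eval g_def by (simp add: algebra_simps)
  have DFpert: "DF \<xi> x - DF \<xi>0 x = (\<xi> - \<xi>0) * poly (pderiv g) x" for \<xi> x
    unfolding DF_def DF_eval g_def by (simp add: algebra_simps)
  obtain R where R0: "R > 0" and R: "\<And>\<xi> x. \<bar>\<xi> - \<xi>0\<bar> \<le> 1 \<Longrightarrow> R \<le> \<bar>x\<bar> \<Longrightarrow> F \<xi> x \<noteq> 0"
    using far_field[OF sn, of \<xi>0 v] unfolding F_def by blast
  define R1 where "R1 = R + 1"
  obtain MG where MG0: "MG > 0"
    and MG: "\<And>x. x \<in> {-R1..R1} \<Longrightarrow> \<bar>poly g x\<bar> \<le> MG \<and> \<bar>poly (pderiv g) x\<bar> \<le> MG"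
  proof -
    have "continuous_on {-R1..R1} (\<lambda>x. \<bar>poly g x\<bar> + \<bar>poly (pderiv g) x\<bar>)"
      by (intro continuous_intros)
    moreover have "{-R1..R1} \<noteq> {}" unfolding R1_def using R0 by simp
    ultimately obtain z where "z \<in> {-R1..R1}"
      and z: "\<forall>y\<in>{-R1..R1}. \<bar>poly g y\<bar> + \<bar>poly (pderiv g) y\<bar> \<le> \<bar>poly g z\<bar> + \<bar>poly (pderiv g) z\<bar>"
      using continuous_attains_sup[OF compact_Icc] by blast
    show ?thesis
    proof (rule that[of "\<bar>poly g z\<bar> + \<bar>poly (pderiv g) z\<bar> + 1"])
      show "0 < \<bar>poly g z\<bar> + \<bar>poly (pderiv g) z\<bar> + 1" by simp
      fix x assume "x \<in> {-R1..R1}"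
      with z have "\<bar>poly g x\<bar> + \<bar>poly (pderiv g) x\<bar> \<le> \<bar>poly g z\<bar> + \<bar>poly (pderiv g) z\<bar>" by blast
      thus "\<bar>poly g x\<bar> \<le> \<bar>poly g z\<bar> + \<bar>poly (pderiv g) z\<bar> + 1 \<and> \<bar>poly (pderiv g) x\<bar> \<le> \<bar>poly g z\<bar> + \<bar>poly (pderiv g) z\<bar> + 1"
        using abs_ge_zero[of "poly g x"] abs_ge_zero[of "poly (pderiv g) x"] by linarith
    qed
  qed
  define K where "K = {x. F \<xi>0 x = 0}"
  have finK: "finite K" unfolding K_def F_def using poly_roots_finite F_nz[OF sn] by blast
  have KR: "\<bar>x0\<bar> < R" if "x0 \<in> K" for x0
    using R[of \<xi>0 x0] that unfolding K_def by force
  have d0nz: "DF \<xi>0 x0 \<noteq> 0" if "x0 \<in> K" for x0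
    using simple that unfolding K_def F_def DF_def by blast
  have DER: "DERIV (F \<xi>) x :> DF \<xi> x" for \<xi> x
    unfolding F_def DF_def by (rule poly_DERIV)
  have contDF: "isCont (DF \<xi>0) x" for x unfolding DF_def by simp
  have ev1: "\<forall>\<^sub>F \<delta> in at_right 0. \<forall>x1\<in>K. x1 \<noteq> x0 \<longrightarrow> 2 * \<delta> < \<bar>x1 - x0\<bar>" for x0
  proof (rule eventually_ball_finite[OF finK], intro ballI)
    fix x1 assume "x1 \<in> K"
    show "\<forall>\<^sub>F \<delta> in at_right 0. x1 \<noteq> x0 \<longrightarrow> 2 * \<delta> < \<bar>x1 - x0\<bar>"
    proof (cases "x1 = x0")
      case False
      hence "\<bar>x1 - x0\<bar> / 2 > 0" by simp
      thus ?thesis unfolding eventually_at_right_field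
        by (intro exI[of _ "\<bar>x1 - x0\<bar> / 2"]) auto
    qed simp
  qed
  have ev2: "\<forall>\<^sub>F \<delta> in at_right 0. \<forall>x. \<bar>x - x0\<bar> \<le> \<delta> \<longrightarrow> \<bar>DF \<xi>0 x0\<bar> / 2 \<le> \<bar>DF \<xi>0 x\<bar>"
    if "x0 \<in> K" for x0
  proof -
    have pos: "\<bar>DF \<xi>0 x0\<bar> / 2 > 0" using d0nz[OF that] by simp
    have "(DF \<xi>0 \<longlongrightarrow> DF \<xi>0 x0) (at x0)" using contDF[of x0] isCont_def by blast
    then obtain e where e0: "e > 0"
      and e: "\<And>x. x \<noteq> x0 \<and> norm (x - x0) < e \<Longrightarrow> norm (DF \<xi>0 x - DF \<xi>0 x0) < \<bar>DF \<xi>0 x0\<bar> / 2"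
      using pos unfolding LIM_eq by blast
    show ?thesis unfolding eventually_at_right_field
    proof (intro exI[of _ e] conjI allI impI)
      fix \<delta> x assume "0 < \<delta>" "\<delta> < e" "\<bar>x - x0\<bar> \<le> \<delta>"
      then show "\<bar>DF \<xi>0 x0\<bar> / 2 \<le> \<bar>DF \<xi>0 x\<bar>"
      proof (cases "x = x0")
        case False
        hence "\<bar>DF \<xi>0 x - DF \<xi>0 x0\<bar> < \<bar>DF \<xi>0 x0\<bar> / 2" using e[of x] \<open>\<delta> < e\<close> \<open>\<bar>x - x0\<bar> \<le> \<delta>\<close> by auto
        thus ?thesis using abs_triangle_ineq2[of "DF \<xi>0 x0" "DF \<xi>0 x"] abs_minus_commute[of "DF \<xi>0 x0" "DF \<xi>0 x"] by linarith
      qed simp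
    qed (use e0 in auto)
  qed
  have ev3: "\<forall>\<^sub>F \<delta> in at_right 0. F \<xi>0 (x0 - \<delta>) * F \<xi>0 (x0 + \<delta>) < 0"
    if "x0 \<in> K" for x0
  proof -
    have F0: "F \<xi>0 x0 = 0" using that unfolding K_def by simp
    show ?thesis
    proof (cases "DF \<xi>0 x0 > 0")
      case True
      obtain d1 where "d1 > 0" and d1: "\<forall>h>0. h < d1 \<longrightarrow> F \<xi>0 x0 < F \<xi>0 (x0 + h)"
        using DERIV_pos_inc_right[OF DER True] by blast
      obtain d2 where "d2 > 0" and d2: "\<forall>h>0. h < d2 \<longrightarrow> F \<xi>0 (x0 - h) < F \<xi>0 x0"
        using DERIV_pos_inc_left[OF DER True] by blast
      show ?thesis unfolding eventually_at_right_field
      proof (intro exI[of _ "min d1 d2"] conjI allI impI)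
        show "min d1 d2 > 0" using \<open>d1 > 0\<close> \<open>d2 > 0\<close> by simp
        fix y :: real assume "0 < y" "y < min d1 d2"
        hence "F \<xi>0 (x0 + y) > 0" "F \<xi>0 (x0 - y) < 0" using d1[rule_format, of y] d2[rule_format, of y] F0 by auto
        thus "F \<xi>0 (x0 - y) * F \<xi>0 (x0 + y) < 0" by (simp add: mult_neg_pos)
      qed
    next
      case False
      hence neg: "DF \<xi>0 x0 < 0" using d0nz[OF that] by linarith
      obtain d1 where "d1 > 0" and d1: "\<forall>h>0. h < d1 \<longrightarrow> F \<xi>0 x0 > F \<xi>0 (x0 + h)"
        using DERIV_neg_dec_right[OF DER neg] by blast
      obtain d2 where "d2 > 0" and d2: "\<forall>h>0. h < d2 \<longrightarrow> F \<xi>0 (x0 - h) > F \<xi>0 x0"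
        using DERIV_neg_dec_left[OF DER neg] by blast
      show ?thesis unfolding eventually_at_right_field
      proof (intro exI[of _ "min d1 d2"] conjI allI impI)
        show "min d1 d2 > 0" using \<open>d1 > 0\<close> \<open>d2 > 0\<close> by simp
        fix y :: real assume "0 < y" "y < min d1 d2"
        hence "F \<xi>0 (x0 + y) < 0" "F \<xi>0 (x0 - y) > 0" using d1[rule_format, of y] d2[rule_format, of y] F0 by auto
        thus "F \<xi>0 (x0 - y) * F \<xi>0 (x0 + y) < 0" by (simp add: mult_pos_neg)
      qed
    qed
  qed
  have ev: "\<forall>\<^sub>F \<delta> in at_right 0. \<delta> \<le> 1 \<and> (\<forall>x0\<in>K. (\<forall>x1\<in>K. x1 \<noteq> x0 \<longrightarrow> 2 * \<delta> < \<bar>x1 - x0\<bar>)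
      \<and> (\<forall>x. \<bar>x - x0\<bar> \<le> \<delta> \<longrightarrow> \<bar>DF \<xi>0 x0\<bar> / 2 \<le> \<bar>DF \<xi>0 x\<bar>)
      \<and> F \<xi>0 (x0 - \<delta>) * F \<xi>0 (x0 + \<delta>) < 0)"
  proof (rule eventually_conj)
    show "\<forall>\<^sub>F \<delta> in at_right 0. \<delta> \<le> (1::real)" unfolding eventually_at_right_field
      by (intro exI[of _ 1]) auto
    show "\<forall>\<^sub>F \<delta> in at_right 0. \<forall>x0\<in>K. (\<forall>x1\<in>K. x1 \<noteq> x0 \<longrightarrow> 2 * \<delta> < \<bar>x1 - x0\<bar>)
      \<and> (\<forall>x. \<bar>x - x0\<bar> \<le> \<delta> \<longrightarrow> \<bar>DF \<xi>0 x0\<bar> / 2 \<le> \<bar>DF \<xi>0 x\<bar>)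
      \<and> F \<xi>0 (x0 - \<delta>) * F \<xi>0 (x0 + \<delta>) < 0"
    proof (rule eventually_ball_finite[OF finK], rule ballI)
      fix x0 assume x0: "x0 \<in> K"
      show "\<forall>\<^sub>F \<delta> in at_right 0. (\<forall>x1\<in>K. x1 \<noteq> x0 \<longrightarrow> 2 * \<delta> < \<bar>x1 - x0\<bar>)
      \<and> (\<forall>x. \<bar>x - x0\<bar> \<le> \<delta> \<longrightarrow> \<bar>DF \<xi>0 x0\<bar> / 2 \<le> \<bar>DF \<xi>0 x\<bar>)
      \<and> F \<xi>0 (x0 - \<delta>) * F \<xi>0 (x0 + \<delta>) < 0"
        unfolding eventually_conj_iff using ev1[of x0] ev2[OF x0] ev3[OF x0] by blast
    qed
  qed
  then obtain b where b0: "b > 0" and b: "\<And>y. 0 < y \<Longrightarrow> y < b \<Longrightarrow> y \<le> 1 \<and> (\<forall>x0\<in>K. (\<forall>x1\<in>K. x1 \<noteq> x0 \<longrightarrow> 2 * y < \<bar>x1 - x0\<bar>)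
      \<and> (\<forall>x. \<bar>x - x0\<bar> \<le> y \<longrightarrow> \<bar>DF \<xi>0 x0\<bar> / 2 \<le> \<bar>DF \<xi>0 x\<bar>)
      \<and> F \<xi>0 (x0 - y) * F \<xi>0 (x0 + y) < 0)"
    unfolding eventually_at_right_field by auto
  define \<delta> where "\<delta> = b / 2"
  have \<delta>0: "\<delta> > 0" and \<delta>1: "\<delta> \<le> 1" using b[of \<delta>] b0 unfolding \<delta>_def by auto
  have sep: "\<And>x0 x1. x0 \<in> K \<Longrightarrow> x1 \<in> K \<Longrightarrow> x1 \<noteq> x0 \<Longrightarrow> 2 * \<delta> < \<bar>x1 - x0\<bar>"
    and dlow: "\<And>x0 x. x0 \<in> K \<Longrightarrow> \<bar>x - x0\<bar> \<le> \<delta> \<Longrightarrow> \<bar>DF \<xi>0 x0\<bar> / 2 \<le> \<bar>DF \<xi>0 x\<bar>"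
    and sgn: "\<And>x0. x0 \<in> K \<Longrightarrow> F \<xi>0 (x0 - \<delta>) * F \<xi>0 (x0 + \<delta>) < 0"
    using b[of \<delta>] b0 unfolding \<delta>_def by auto
  define I where "I x0 = {x0 - \<delta> <..< x0 + \<delta>}" for x0
  define Kc where "Kc = {-R1..R1} - (\<Union>x0\<in>K. I x0)"
  obtain m2 where m20: "m2 > 0" and m2: "\<And>x. x \<in> Kc \<Longrightarrow> m2 \<le> \<bar>F \<xi>0 x\<bar>"
  proof (cases "Kc = {}")
    case True thus ?thesis using that[of 1] by auto
  next
    case False
    have "compact Kc" unfolding Kc_def I_def
      by (intro compact_diff compact_Icc open_UN ballI open_greaterThanLessThan)
    moreover have "continuous_on Kc (\<lambda>x. \<bar>F \<xi>0 x\<bar>)" unfolding F_def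
      by (intro continuous_intros)
    ultimately obtain z where zK: "z \<in> Kc" and z: "\<forall>y\<in>Kc. \<bar>F \<xi>0 z\<bar> \<le> \<bar>F \<xi>0 y\<bar>"
      using continuous_attains_inf False by blast
    have "z \<notin> K"
    proof
      assume "z \<in> K"
      hence "z \<in> I z" unfolding I_def using \<delta>0 by simp
      thus False using zK \<open>z \<in> K\<close> unfolding Kc_def by blast
    qed
    hence "\<bar>F \<xi>0 z\<bar> > 0" unfolding K_def by simp
    thus ?thesis using that z by blast
  qed
  obtain m1 where m10: "m1 > 0" and m1: "\<And>x0. x0 \<in> K \<Longrightarrow> m1 \<le> \<bar>DF \<xi>0 x0\<bar> / 2"
  proof -
    define m1 where "m1 = Min (insert 1 ((\<lambda>x0. \<bar>DF \<xi>0 x0\<bar> / 2) ` K))"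
    have "m1 > 0" unfolding m1_def using finK d0nz by (subst Min_gr_iff) auto
    moreover have "m1 \<le> \<bar>DF \<xi>0 x0\<bar> / 2" if "x0 \<in> K" for x0
      unfolding m1_def using finK that by (intro Min_le) auto
    ultimately show ?thesis using that by blast
  qed
  define m where "m = min m1 m2"
  have m0: "m > 0" unfolding m_def using m10 m20 by simp
  define \<eta> where "\<eta> = min 1 (m / MG)"
  have \<eta>0: "\<eta> > 0" unfolding \<eta>_def using m0 MG0 by simp
  show ?thesis
  proof (intro exI[of _ \<eta>] conjI allI impI \<eta>0)
    fix \<xi> assume xi: "\<bar>\<xi> - \<xi>0\<bar> < \<eta>"
    have xi1: "\<bar>\<xi> - \<xi>0\<bar> \<le> 1" using xi unfolding \<eta>_def by simp
    have xiM: "\<bar>\<xi> - \<xi>0\<bar> * MG < m"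
    proof -
      have "\<bar>\<xi> - \<xi>0\<bar> < m / MG" using xi unfolding \<eta>_def by simp
      thus ?thesis using MG0 by (simp add: pos_less_divide_eq)
    qed
    have Fclose: "\<bar>F \<xi> x - F \<xi>0 x\<bar> < m" if "x \<in> {-R1..R1}" for x
    proof -
      have "\<bar>F \<xi> x - F \<xi>0 x\<bar> = \<bar>\<xi> - \<xi>0\<bar> * \<bar>poly g x\<bar>" unfolding Fpert abs_mult ..
      also have "\<dots> \<le> \<bar>\<xi> - \<xi>0\<bar> * MG" using MG[OF that] by (intro mult_left_mono) auto
      finally show ?thesis using xiM by simp
    qed
    have DFclose: "\<bar>DF \<xi> x - DF \<xi>0 x\<bar> < m" if "x \<in> {-R1..R1}" for x
    proof -
      have "\<bar>DF \<xi> x - DF \<xi>0 x\<bar> = \<bar>\<xi> - \<xi>0\<bar> * \<bar>poly (pderiv g) x\<bar>" unfolding DFpert abs_mult ..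
      also have "\<dots> \<le> \<bar>\<xi> - \<xi>0\<bar> * MG" using MG[OF that] by (intro mult_left_mono) auto
      finally show ?thesis using xiM by simp
    qed
    define S where "S = {x. F \<xi> x = 0}"
    have C1: "S \<subseteq> (\<Union>x0\<in>K. I x0)"
    proof
      fix x assume "x \<in> S"
      hence Fx: "F \<xi> x = 0" unfolding S_def by simp
      have "\<bar>x\<bar> < R" using R[OF xi1, of x] Fx by force
      hence xR: "x \<in> {-R1..R1}" unfolding R1_def by auto
      show "x \<in> (\<Union>x0\<in>K. I x0)"
      proof (rule ccontr)
        assume "x \<notin> (\<Union>x0\<in>K. I x0)"
        hence "x \<in> Kc" using xR unfolding Kc_def by simp
        hence "m2 \<le> \<bar>F \<xi>0 x\<bar>" by (rule m2)
        moreover have "\<bar>F \<xi> x - F \<xi>0 x\<bar> < m" by (rule Fclose[OF xR])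
        ultimately show False using Fx unfolding m_def by linarith
      qed
    qed
    have C2: "\<exists>!x. x \<in> S \<inter> I x0" if x0K: "x0 \<in> K" for x0
    proof -
      have endp: "x0 + t * \<delta> \<in> Kc" if t: "t = 1 \<or> t = -1" for t
      proof -
        have "\<bar>x0 + t * \<delta>\<bar> \<le> R1" using KR[OF x0K] \<delta>1 \<delta>0 t unfolding R1_def by auto
        moreover have "x0 + t * \<delta> \<notin> I x1" if "x1 \<in> K" for x1
        proof (cases "x1 = x0")
          case True thus ?thesis unfolding I_def using t by auto
        next
          case False thus ?thesis using sep[OF x0K that False] t unfolding I_def by auto
        qed
        ultimately show ?thesis unfolding Kc_def by auto
      qed
      have sameL: "0 < F \<xi> (x0 - \<delta>) * F \<xi>0 (x0 - \<delta>)"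
      proof (rule same_sign)
        have e: "x0 - \<delta> \<in> Kc" using endp[of "-1"] by simp
        hence "x0 - \<delta> \<in> {-R1..R1}" unfolding Kc_def by simp
        thus "\<bar>F \<xi> (x0 - \<delta>) - F \<xi>0 (x0 - \<delta>)\<bar> < \<bar>F \<xi>0 (x0 - \<delta>)\<bar>"
          using Fclose m2[OF e] unfolding m_def by force
      qed
      have sameR: "0 < F \<xi> (x0 + \<delta>) * F \<xi>0 (x0 + \<delta>)"
      proof (rule same_sign)
        have e: "x0 + \<delta> \<in> Kc" using endp[of "1"] by simp
        hence "x0 + \<delta> \<in> {-R1..R1}" unfolding Kc_def by simp
        thus "\<bar>F \<xi> (x0 + \<delta>) - F \<xi>0 (x0 + \<delta>)\<bar> < \<bar>F \<xi>0 (x0 + \<delta>)\<bar>"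
          using Fclose m2[OF e] unfolding m_def by force
      qed
      have "F \<xi> (x0 - \<delta>) * F \<xi> (x0 + \<delta>) < 0"
        by (rule sign_prod[OF sameL sameR sgn[OF x0K]])
      then obtain x where "x > x0 - \<delta>" "x < x0 + \<delta>" "F \<xi> x = 0"
        using poly_IVT[of "x0 - \<delta>" "x0 + \<delta>" "f_v_at n s v \<xi>"] \<delta>0 unfolding F_def by auto
      hence ex: "x \<in> S \<inter> I x0" unfolding S_def I_def by auto
      have DFnz: "DF \<xi> z \<noteq> 0" if "z \<in> I x0" for z
      proof -
        have zR: "z \<in> {-R1..R1}" using that KR[OF x0K] \<delta>1 unfolding I_def R1_def by auto
        have "\<bar>z - x0\<bar> \<le> \<delta>" using that unfolding I_def by auto
        hence "m1 \<le> \<bar>DF \<xi>0 z\<bar>" using m1[OF x0K] dlow[OF x0K, of z] by linarith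
        thus ?thesis using DFclose[OF zR] unfolding m_def by linarith
      qed
      have uniq: "a = c" if a: "a \<in> S \<inter> I x0" and c: "c \<in> S \<inter> I x0" for a c
      proof (rule ccontr)
        assume "a \<noteq> c"
        have *: "\<not> (p < q)" if p: "p \<in> S \<inter> I x0" and q: "q \<in> S \<inter> I x0" for p q
        proof
          assume pq: "p < q"
          have "F \<xi> p = F \<xi> q" using p q unfolding S_def by simp
          moreover have "continuous_on {p..q} (F \<xi>)" unfolding F_def by (intro continuous_intros)
          moreover have "\<And>x. p < x \<Longrightarrow> x < q \<Longrightarrow> (F \<xi> has_derivative (\<lambda>h. DF \<xi> x * h)) (at x)"
            using DER unfolding has_field_derivative_def by blast
          ultimately obtain z where z: "p < z" "z < q" "(\<lambda>h. DF \<xi> z * h) = (\<lambda>h. 0)"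
            using Rolle_deriv[OF pq, of "F \<xi>" "\<lambda>x h. DF \<xi> x * h"] by blast
          have "DF \<xi> z = 0" using fun_cong[OF z(3), of 1] by simp
          moreover have "z \<in> I x0" using z p q unfolding I_def by auto
          ultimately show False using DFnz by blast
        qed
        show False using *[OF a c] *[OF c a] \<open>a \<noteq> c\<close> by linarith
      qed
      show ?thesis using ex uniq by blast
    qed
    have eqS: "S = (\<Union>x0\<in>K. S \<inter> I x0)" using C1 by blast
    have "card (\<Union>x0\<in>K. S \<inter> I x0) = (\<Sum>x0\<in>K. card (S \<inter> I x0))"
    proof (intro card_UN_disjoint finK ballI impI)
      fix x0 assume "x0 \<in> K"
      then obtain x where "S \<inter> I x0 = {x}" using C2 by blast
      thus "finite (S \<inter> I x0)" by simp
    next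
      fix x0 x1 assume "x0 \<in> K" "x1 \<in> K" "x0 \<noteq> x1"
      hence "2 * \<delta> < \<bar>x1 - x0\<bar>" using sep by blast
      thus "S \<inter> I x0 \<inter> (S \<inter> I x1) = {}" unfolding I_def by auto
    qed
    hence "card S = (\<Sum>x0\<in>K. card (S \<inter> I x0))" using eqS by simp
    also have "\<dots> = (\<Sum>x0\<in>K. 1)"
    proof (rule sum.cong[OF refl])
      fix x0 assume "x0 \<in> K"
      then obtain x where "S \<inter> I x0 = {x}" using C2 by blast
      thus "card (S \<inter> I x0) = 1" by simp
    qed
    finally show "card {x. poly (f_v_at n s v \<xi>) x = 0} = card {x. poly (f_v_at n s v \<xi>0) x = 0}"
      unfolding S_def K_def F_def by simp
  qed
qed


theorem lemma5p5:
  fixes n s :: nat and v :: "nat \<Rightarrow> real" and \<gamma>\<^sub>0 :: int and \<rho>\<^sub>0 :: real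
  assumes "1 \<le> s" and "s < n"
    and "P_v n s v \<noteq> 0"
    and "\<rho>\<^sub>0 > alpha_v n s v"
    and "\<forall>\<xi>. \<xi> > \<rho>\<^sub>0 \<longrightarrow> int (num_real_roots (f_v_at n s v \<xi>)) = \<gamma>\<^sub>0"
  shows "\<forall>\<xi>. \<xi> > alpha_v n s v \<longrightarrow> int (num_real_roots (f_v_at n s v \<xi>)) = \<gamma>\<^sub>0"
proof (intro allI impI)
  fix \<xi> assume xi: "\<xi> > alpha_v n s v"
  define A where "A = {alpha_v n s v <..}"
  define N where "N \<xi> = int (num_real_roots (f_v_at n s v \<xi>))" for \<xi>
  have finZ: "finite {a. poly (P_v n s v) a = 0}" using poly_roots_finite assms(3) by blast
  have simple: "\<forall>x. poly (f_v_at n s v a) x = 0 \<longrightarrow> poly (pderiv (f_v_at n s v a)) x \<noteq> 0"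
    if "a \<in> A" for a
  proof (intro allI impI notI)
    fix x assume "poly (f_v_at n s v a) x = 0" "poly (pderiv (f_v_at n s v a)) x = 0"
    hence "poly (P_v n s v) a = 0" using P_v_root[of s n v a x] assms(1,2) by simp
    hence "a \<le> alpha_v n s v" unfolding alpha_v_def using finZ by (intro Max_ge) auto
    thus False using that unfolding A_def by simp
  qed
  have loc: "\<forall>a\<in>A. eventually (\<lambda>b. N a = N b) (at a within A)"
  proof
    fix a assume aA: "a \<in> A"
    obtain \<eta> where \<eta>0: "\<eta> > 0" and \<eta>: "\<And>b. \<bar>b - a\<bar> < \<eta> \<Longrightarrow>
        card {x. poly (f_v_at n s v b) x = 0} = card {x. poly (f_v_at n s v a) x = 0}"
      using local_const[OF assms(2) simple[OF aA]] by blast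
    show "eventually (\<lambda>b. N a = N b) (at a within A)"
      unfolding eventually_at
      by (intro exI[of _ \<eta>] conjI \<eta>0 ballI impI)
         (use \<eta> in \<open>auto simp: N_def num_real_roots_def dist_real_def\<close>)
  qed
  define b where "b = max \<xi> \<rho>\<^sub>0 + 1"
  have "N \<xi> = N b"
    by (rule connected_local_const[OF _ _ _ loc]) (use xi assms(4) in \<open>auto simp: A_def b_def\<close>)
  moreover have "N b = \<gamma>\<^sub>0" using assms(5) unfolding N_def b_def by simp
  ultimately show "int (num_real_roots (f_v_at n s v \<xi>)) = \<gamma>\<^sub>0" unfolding N_def by simp
qed

end
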